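(* Let $\lambda=(\lambda_m)_{m\in\mathbb{Z}}$ be a sequence of real numbers in $[0,1)$. Then there exist an entire function $P_\lambda:\mathbb{C}\to\mathbb{C}$ vanishing at every point of the set $\{n+\lambda_m+im: m,n\in\mathbb{Z}\}$ and a constant $c>0$ such that $|P_\lambda(z)|\le e^{c|z|^2}$ for all $z\in\mathbb{C}$. *)

theory Defs
  imports "HOL-Analysis.Analysis"
begin

end

theory Submission
  imports Defs "HOL-Complex_Analysis.Complex_Analysis"
begin

lemma prod_split_shift:
  fixes g :: "nat \<Rightarrow> real"
  shows "(\<Prod>k<N+K. g k) = (\<Prod>k<N. g k) * (\<Prod>j<K. g (N + j))"
  by (induction K) (auto simp: ac_simps)

lemma prod_mono_len:
  fixes g :: "nat \<Rightarrow> real"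
  assumes "\<And>k. g k \<ge> 1"
  shows "(\<Prod>k<K. g k) \<le> (\<Prod>k<K+d. g k)"
proof (induction d)
  case (Suc d)
  have "(\<Prod>k<K+d. g k) \<ge> 0" using assms by (intro prod_nonneg) (auto intro: order.trans[OF zero_le_one])
  hence "(\<Prod>k<K+d. g k) \<le> (\<Prod>k<K+d. g k) * g (K+d)"
    using assms[of "K+d"] by (simp add: mult_le_cancel_left1)
  with Suc show ?case by simp
qed simp

lemma geom_half: "(\<Sum>j<K. (1/2::real) ^ Suc j) = 1 - (1/2)^K"
  by (induction K) (auto simp: field_simps)

lemma growth:
  fixes w :: real
  shows "(\<Prod>k<K. 1 + exp (2*pi*(w - real k))) \<le> exp (20 * (w^2 + 1))"
proof -
  define g where "g = (\<lambda>k::nat. 1 + exp (2*pi*(w - real k)))"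
  define a where "a = \<bar>w\<bar>"
  define N where "N = nat \<lceil>a\<rceil> + 1"
  have a0: "a \<ge> 0" by (simp add: a_def)
  have g1: "g k \<ge> 1" for k by (simp add: g_def)
  have NaR: "real N \<le> a + 2" "a + 1 \<le> real N" unfolding N_def using a0
    by (auto simp: of_nat_nat) linarith+
  have "(\<Prod>k<K. g k) \<le> (\<Prod>k<N+K. g k)"
    using prod_mono_len[of g K N, OF g1] by (simp add: add.commute)
  also have "\<dots> = (\<Prod>k<N. g k) * (\<Prod>j<K. g (N + j))" by (rule prod_split_shift)
  also have "\<dots> \<le> exp (1 + 2*pi*a) ^ N * exp 1"
  proof (rule mult_mono)
    have "(\<Prod>k<N. g k) \<le> (\<Prod>k<N. exp (1 + 2*pi*a))"
    proof (rule prod_mono)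
      fix k assume "k \<in> {..<N}"
      have "exp (2*pi*(w - real k)) \<le> exp (2*pi*a)"
        unfolding a_def by (intro exp_mono mult_left_mono) auto
      moreover have "1 + exp (2*pi*a) \<le> exp (1 + 2*pi*a)"
      proof -
        have "1 \<le> exp (2*pi*a)" using a0 by simp
        moreover have "2 \<le> exp (1::real)" using exp_ge_add_one_self[of 1] by simp
        ultimately have "2 * exp (2*pi*a) \<le> exp 1 * exp (2*pi*a)" by (intro mult_right_mono) auto
        with \<open>1 \<le> exp (2*pi*a)\<close> have "1 + exp (2*pi*a) \<le> exp 1 * exp (2*pi*a)" by linarith
        thus ?thesis by (simp add: exp_add)
      qed
      ultimately have "g k \<le> exp (1 + 2*pi*a)" unfolding g_def by linarith
      moreover have "0 \<le> g k" using g1[of k] by linarith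
      ultimately show "0 \<le> g k \<and> g k \<le> exp (1 + 2*pi*a)" by blast
    qed
    thus "(\<Prod>k<N. g k) \<le> exp (1 + 2*pi*a) ^ N" by simp
    have "(\<Prod>j<K. g (N + j)) \<le> (\<Prod>j<K. exp ((1/2) ^ Suc j))"
    proof (rule prod_mono)
      fix j assume "j \<in> {..<K}"
      have "w - real (N + j) \<le> - real (Suc j)" using NaR unfolding a_def by auto
      hence "exp (2*pi*(w - real (N+j))) \<le> exp (2*pi * (- real (Suc j)))"
        by (intro exp_mono mult_left_mono) auto
      also have "\<dots> = exp (- 2*pi) ^ Suc j"
        by (subst exp_of_nat_mult[symmetric]) (simp add: algebra_simps)
      also have "\<dots> \<le> (1/2) ^ Suc j"
      proof (rule power_mono)
        have "exp (2*pi) \<ge> 1 + 2*pi" by (rule exp_ge_add_one_self)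
        moreover have "pi \<ge> 3" using pi_gt3 by simp
        ultimately have "exp (2*pi) \<ge> 2" by linarith
        thus "exp (- 2*pi) \<le> 1/2" by (simp add: exp_minus field_simps)
      qed simp
      finally have e: "exp (2*pi*(w - real (N+j))) \<le> (1/2) ^ Suc j" .
      have "g (N+j) \<le> exp (exp (2*pi*(w - real (N+j))))"
        unfolding g_def by (rule exp_ge_add_one_self)
      also have "\<dots> \<le> exp ((1/2) ^ Suc j)" using e by (rule exp_mono)
      finally show "0 \<le> g (N+j) \<and> g (N+j) \<le> exp ((1/2) ^ Suc j)"
        using g1[of "N+j"] by linarith
    qed
    also have "\<dots> = exp (\<Sum>j<K. (1/2) ^ Suc j)" by (simp add: exp_sum)
    also have "\<dots> \<le> exp 1" unfolding geom_half by simp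
    finally show "(\<Prod>j<K. g (N + j)) \<le> exp 1" .
  qed (auto intro: prod_nonneg order.trans[OF zero_le_one g1])
  also have "\<dots> = exp (real N * (1 + 2*pi*a) + 1)"
    by (simp only: exp_add exp_of_nat_mult)
  also have "\<dots> \<le> exp (20 * (w^2 + 1))"
  proof -
    have "real N * (1 + 2*pi*a) \<le> (a + 2) * (1 + 8 * a)"
      using NaR a0 pi_less_4 by (intro mult_mono) (auto intro: mult_right_mono)
    moreover have "(a + 2) * (1 + 8 * a) + 1 \<le> 20 * (a^2 + 1)"
    proof -
      have "0 \<le> 12 * (a - 17/24)^2" by simp
      thus ?thesis unfolding power2_eq_square by (simp add: algebra_simps)
    qed
    moreover have "a^2 = w^2" by (simp add: a_def)
    ultimately show ?thesis by simp
  qed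
  finally show ?thesis by (simp add: g_def)
qed


lemma entire_prod:
  fixes e :: "nat \<Rightarrow> complex \<Rightarrow> complex"
  assumes holo: "\<And>k. e k holomorphic_on UNIV"
  assumes bnd: "\<And>R. \<exists>M. summable M \<and> (\<forall>k z. norm z \<le> R \<longrightarrow> norm (e k z) \<le> M k)"
  shows "(\<lambda>z. \<Prod>k. (1 - e k z)) holomorphic_on UNIV"
    and "(\<lambda>k. 1 - e k z) has_prod (\<Prod>k. 1 - e k z)"
    and "convergent_prod (\<lambda>k. 1 - e k z)"
proof -
  have conv: "convergent_prod (\<lambda>k. 1 - e k z)" for z
  proof -
    obtain M where M: "summable M" "\<And>k w. norm w \<le> norm z \<Longrightarrow> norm (e k w) \<le> M k"
      using bnd[of "norm z"] by blast
    have "summable (\<lambda>k. norm ((1 - e k z) - 1))"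
      by (rule summable_comparison_test[OF _ M(1)]) (use M(2) in auto)
    hence "abs_convergent_prod (\<lambda>k. 1 - e k z)"
      by (simp add: abs_convergent_prod_conv_summable)
    thus ?thesis by (rule abs_convergent_prod_imp_convergent_prod)
  qed
  thus "(\<lambda>k. 1 - e k z) has_prod (\<Prod>k. 1 - e k z)" for z by blast
  show "convergent_prod (\<lambda>k. 1 - e k z)" by (rule conv)
  define f where "f = (\<lambda>z. \<Prod>k. (1 - e k z))"
  define P where "P = (\<lambda>N z. \<Prod>n<N. (1 - e n z))"
  have ulim: "uniform_limit (cball 0 R) P f sequentially" if R: "R > 0" for R
  proof -
    obtain M where M: "summable M" "\<And>k w. norm w \<le> R \<Longrightarrow> norm (e k w) \<le> M k"
      using bnd[of R] by blast
    have "uniformly_convergent_on (cball 0 R) P"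
      unfolding P_def
    proof (rule uniformly_convergent_on_prod')
      show "uniformly_convergent_on (cball 0 R) (\<lambda>N z. \<Sum>n<N. norm ((1 - e n z) - 1))"
        by (rule Weierstrass_m_test'[OF _ M(1)]) (use M(2) in auto)
      show "continuous_on (cball 0 R) (\<lambda>z. 1 - e n z)" for n
        using holo[of n] by (intro continuous_intros holomorphic_on_imp_continuous_on)
             (auto intro: holomorphic_on_subset)
    qed auto
    then obtain g where g: "uniform_limit (cball 0 R) P g at_top"
      by (auto simp: uniformly_convergent_on_def)
    also have "?this \<longleftrightarrow> uniform_limit (cball 0 R) P f at_top"
    proof (intro uniform_limit_cong)
      fix z :: complex assume "z \<in> cball 0 R"
      with g have "(\<lambda>n. P (Suc n) z) \<longlonglongrightarrow> g z"
        by (metis tendsto_uniform_limitI filterlim_sequentially_Suc)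
      moreover have "(\<lambda>n. P (Suc n) z) \<longlonglongrightarrow> f z"
        using convergent_prod_LIMSEQ[OF conv[of z]] unfolding P_def lessThan_Suc_atMost
        by (simp add: f_def)
      ultimately show "g z = f z"
        using tendsto_unique by force
    qed auto
    finally show ?thesis .
  qed
  show "(\<lambda>z. \<Prod>k. (1 - e k z)) holomorphic_on UNIV"
    unfolding f_def[symmetric]
  proof (rule holomorphic_uniform_sequence)
    fix z :: complex
    have *: "uniform_limit (cball 0 (norm z + 1)) P f sequentially"
      by (rule ulim) (auto intro: add_nonneg_pos)
    hence "uniform_limit (cball z 1) P f sequentially"
      by (rule uniform_limit_on_subset) (simp add: cball_subset_cball_iff)
    thus "\<exists>d>0. cball z d \<subseteq> UNIV \<and> uniform_limit (cball z d) P f sequentially"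
      by (intro exI[of _ 1]) auto
  next
    show "P n holomorphic_on UNIV" for n
      unfolding P_def by (intro holomorphic_intros holo)
  qed auto
qed

lemma prod_bound:
  fixes e :: "nat \<Rightarrow> complex"
  assumes conv: "convergent_prod (\<lambda>k. 1 - e k)"
  assumes ne: "\<And>k. norm (e k) = exp (2*pi*(w - real k))"
  shows "norm (\<Prod>k. 1 - e k) \<le> exp (20 * (w^2 + 1))"
proof -
  have lim: "(\<lambda>n. norm (\<Prod>k\<le>n. 1 - e k)) \<longlonglongrightarrow> norm (\<Prod>k. 1 - e k)"
    by (intro tendsto_norm convergent_prod_LIMSEQ conv)
  show ?thesis
  proof (rule LIMSEQ_le_const2[OF lim], intro exI allI impI)
    fix n :: nat
    have "norm (\<Prod>k\<le>n. 1 - e k) = (\<Prod>k\<le>n. norm (1 - e k))" by (rule prod_norm[symmetric])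
    also have "\<dots> \<le> (\<Prod>k\<le>n. 1 + exp (2*pi*(w - real k)))"
    proof (rule prod_mono)
      fix k
      have "norm (1 - e k) \<le> norm (1::complex) + norm (e k)" by (rule norm_triangle_ineq4)
      thus "0 \<le> norm (1 - e k) \<and> norm (1 - e k) \<le> 1 + exp (2*pi*(w - real k))"
        using ne[of k] by simp
    qed
    also have "\<dots> = (\<Prod>k<Suc n. 1 + exp (2*pi*(w - real k)))"
      by (simp add: lessThan_Suc_atMost)
    also have "\<dots> \<le> exp (20 * (w^2 + 1))" by (rule growth)
    finally show "norm (\<Prod>k\<le>n. 1 - e k) \<le> exp (20 * (w^2 + 1))" .
  qed
qed



lemma exp_int_2pi: "exp (-(2*pi*\<i>) * of_int n) = 1" "exp ((2*pi*\<i>) * of_int n) = 1"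
proof -
  have "exp (-(2*pi*\<i>) * of_int n) = exp ((2 * of_int (-n) * pi) * \<i>)"
    by (simp add: algebra_simps)
  also have "\<dots> = 1" by (rule exp_integer_2pi) simp
  finally show "exp (-(2*pi*\<i>) * of_int n) = 1" .
  have "exp ((2*pi*\<i>) * of_int n) = exp ((2 * of_int n * pi) * \<i>)"
    by (simp add: algebra_simps)
  also have "\<dots> = 1" by (rule exp_integer_2pi) simp
  finally show "exp ((2*pi*\<i>) * of_int n) = 1" .
qed

lemma geom_bound:
  assumes "\<bar>v\<bar> \<le> R"
  shows "exp (2*pi*(v - real k)) \<le> exp (2*pi*R) * exp (-2*pi) ^ k"
proof -
  have "exp (-2*pi) ^ k = exp (real k * (-2*pi))" by (simp only: exp_of_nat_mult)
  hence "exp (2*pi*R) * exp (-2*pi) ^ k = exp (2*pi*(R - real k))"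
    by (simp add: exp_add[symmetric] algebra_simps)
  moreover have "2*pi*(v - real k) \<le> 2*pi*(R - real k)"
    using assms by (intro mult_left_mono) auto
  ultimately show ?thesis by simp
qed

lemma summable_geom_bound: "summable (\<lambda>k. exp (2*pi*R) * exp (-2*pi) ^ k)"
  by (intro summable_mult summable_geometric) simp

lemma z1: assumes km: "of_nat (Suc k) = (of_int m :: complex)"
 shows "exp (-(2*pi*\<i>) * (Complex (of_int n + lam m) (of_int m) - of_real (lam m) - \<i> * of_nat (Suc k))) = exp (-(2*pi*\<i>) * of_int n)"
  unfolding km by (simp add: Complex_eq)
lemma z2: assumes km: "(of_nat k :: complex) = - of_int m"
 shows "exp ((2*pi*\<i>) * (Complex (of_int n + lam m) (of_int m) - of_real (lam m) + \<i> * of_nat k)) = exp ((2*pi*\<i>) * of_int n)"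
  unfolding km by (simp add: Complex_eq)

theorem proposition6:
  fixes lam :: "int \<Rightarrow> real"
  assumes "\<And>m. 0 \<le> lam m \<and> lam m < 1"
  shows "\<exists>P :: complex \<Rightarrow> complex. \<exists>c :: real.
           P holomorphic_on UNIV \<and> (\<exists>z. P z \<noteq> 0) \<and>
           (\<forall>m n :: int. P (Complex (of_int n + lam m) (of_int m)) = 0) \<and>
           c > 0 \<and> (\<forall>z. norm (P z) \<le> exp (c * (norm z)^2))"
proof -
  define e1 where "e1 = (\<lambda>k z. exp (-(2*pi*\<i>) * (z - of_real (lam (int k + 1)) - \<i> * of_nat (Suc k))))"
  define e2 where "e2 = (\<lambda>k z. exp ((2*pi*\<i>) * (z - of_real (lam (- int k)) + \<i> * of_nat k)))"
  have n1: "norm (e1 k z) = exp (2*pi*((Im z - 1) - real k))" for k z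
    by (simp add: e1_def algebra_simps)
  have n2: "norm (e2 k z) = exp (2*pi*((- Im z) - real k))" for k z
    by (simp add: e2_def algebra_simps)
  have h1: "e1 k holomorphic_on UNIV" for k unfolding e1_def by (intro holomorphic_intros)
  have h2: "e2 k holomorphic_on UNIV" for k unfolding e2_def by (intro holomorphic_intros)
  have b1: "\<exists>M. summable M \<and> (\<forall>k z. norm z \<le> R \<longrightarrow> norm (e1 k z) \<le> M k)" for R
  proof (intro exI conjI allI impI)
    fix k and z :: complex assume "norm z \<le> R"
    hence "\<bar>Im z - 1\<bar> \<le> R + 1" using abs_Im_le_cmod[of z] by linarith
    thus "norm (e1 k z) \<le> exp (2*pi*(R+1)) * exp (-2*pi) ^ k"
      unfolding n1 by (rule geom_bound)
  qed (rule summable_geom_bound)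
  have b2: "\<exists>M. summable M \<and> (\<forall>k z. norm z \<le> R \<longrightarrow> norm (e2 k z) \<le> M k)" for R
  proof (intro exI conjI allI impI)
    fix k and z :: complex assume "norm z \<le> R"
    hence "\<bar>- Im z\<bar> \<le> R" using abs_Im_le_cmod[of z] by linarith
    thus "norm (e2 k z) \<le> exp (2*pi*R) * exp (-2*pi) ^ k"
      unfolding n2 by (rule geom_bound)
  qed (rule summable_geom_bound)
  note E1 = entire_prod[of e1, OF h1 b1]
  note E2 = entire_prod[of e2, OF h2 b2]
  define Q1 where "Q1 = (\<lambda>z. \<Prod>k. (1 - e1 k z))"
  define Q2 where "Q2 = (\<lambda>z. \<Prod>k. (1 - e2 k z))"
  define P where "P = (\<lambda>z. of_real (exp (-80)) * (Q1 z * Q2 z))"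
  have holP: "P holomorphic_on UNIV"
    unfolding P_def Q1_def Q2_def by (intro holomorphic_intros E1(1) E2(1))
  have nz: "P (\<i>/2) \<noteq> 0"
  proof -
    have f1: "1 - e1 k (\<i>/2) \<noteq> 0" for k
    proof
      assume "1 - e1 k (\<i>/2) = 0"
      hence "e1 k (\<i>/2) = 1" by simp
      hence "norm (e1 k (\<i>/2)) = 1" by simp
      moreover have "norm (e1 k (\<i>/2)) < 1" unfolding n1 by (simp add: mult_pos_neg)
      ultimately show False by simp
    qed
    have f2: "1 - e2 k (\<i>/2) \<noteq> 0" for k
    proof
      assume "1 - e2 k (\<i>/2) = 0"
      hence "e2 k (\<i>/2) = 1" by simp
      hence "norm (e2 k (\<i>/2)) = 1" by simp
      moreover have "norm (e2 k (\<i>/2)) < 1" unfolding n2 by (simp add: mult_pos_neg)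
      ultimately show False by simp
    qed
    have "Q1 (\<i>/2) \<noteq> 0" unfolding Q1_def
      using has_prod_eq_0_iff[OF E1(2)[of "\<i>/2"]] f1 by auto
    moreover have "Q2 (\<i>/2) \<noteq> 0" unfolding Q2_def
      using has_prod_eq_0_iff[OF E2(2)[of "\<i>/2"]] f2 by auto
    ultimately show ?thesis unfolding P_def by simp
  qed
  have zeros: "P (Complex (of_int n + lam m) (of_int m)) = 0" for m n :: int
  proof (cases "m \<ge> 1")
    case True
    define k where "k = nat (m - 1)"
    have km: "int k + 1 = m" "of_nat (Suc k) = (of_int m :: complex)" using True by (auto simp: k_def)
    have "e1 k (Complex (of_int n + lam m) (of_int m)) = exp (-(2*pi*\<i>) * of_int n)"
      unfolding e1_def km(1) by (rule z1[OF km(2)])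
    hence "1 - e1 k (Complex (of_int n + lam m) (of_int m)) = 0"
      using exp_int_2pi[of n] by simp
    hence "Q1 (Complex (of_int n + lam m) (of_int m)) = 0" unfolding Q1_def
      using has_prod_eq_0_iff[OF E1(2)[of "Complex (of_int n + lam m) (of_int m)"]] by auto
    thus ?thesis unfolding P_def by simp
  next
    case False
    define k where "k = nat (- m)"
    have km: "- int k = m" "(of_nat k :: complex) = - of_int m" using False by (auto simp: k_def)
    have "e2 k (Complex (of_int n + lam m) (of_int m)) = exp ((2*pi*\<i>) * of_int n)"
      unfolding e2_def km(1) by (rule z2[OF km(2)])
    hence "1 - e2 k (Complex (of_int n + lam m) (of_int m)) = 0"
      using exp_int_2pi[of n] by simp
    hence "Q2 (Complex (of_int n + lam m) (of_int m)) = 0" unfolding Q2_def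
      using has_prod_eq_0_iff[OF E2(2)[of "Complex (of_int n + lam m) (of_int m)"]] by auto
    thus ?thesis unfolding P_def by simp
  qed
  have bound: "norm (P z) \<le> exp (60 * (norm z)^2)" for z
  proof -
    define y where "y = Im z"
    have q1: "norm (Q1 z) \<le> exp (20 * ((y - 1)^2 + 1))"
      unfolding Q1_def y_def by (rule prod_bound[OF E1(3)]) (rule n1)
    have q2: "norm (Q2 z) \<le> exp (20 * ((- y)^2 + 1))"
      unfolding Q2_def y_def by (rule prod_bound[OF E2(3)]) (rule n2)
    have "norm (P z) = exp (-80) * (norm (Q1 z) * norm (Q2 z))"
      by (simp add: P_def norm_mult)
    also have "\<dots> \<le> exp (-80) * (exp (20 * ((y - 1)^2 + 1)) * exp (20 * ((- y)^2 + 1)))"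
      using q1 q2 by (intro mult_left_mono mult_mono) auto
    also have "\<dots> = exp (-80 + 20 * ((y - 1)^2 + 1) + 20 * ((- y)^2 + 1))"
      by (simp only: exp_add mult.assoc)
    also have "\<dots> \<le> exp (60 * (norm z)^2)"
    proof -
      have "y^2 \<le> (norm z)^2" unfolding y_def
        using abs_Im_le_cmod[of z] by (metis abs_le_square_iff abs_norm_cancel)
      moreover have "0 \<le> 20 * (y + 1)^2" by simp
      ultimately have "-80 + 20 * ((y - 1)^2 + 1) + 20 * ((- y)^2 + 1) \<le> 60 * (norm z)^2"
        unfolding power2_eq_square by (simp add: algebra_simps)
      thus ?thesis by simp
    qed
    finally show ?thesis .
  qed
  show ?thesis
  proof (intro exI conjI allI)
    show "P holomorphic_on UNIV" by (rule holP)
    show "P (\<i>/2) \<noteq> 0" by (rule nz)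
    show "P (Complex (of_int n + lam m) (of_int m)) = 0" for m n :: int by (rule zeros)
    show "norm (P z) \<le> exp (60 * (norm z)^2)" for z by (rule bound)
  qed simp
qed



end
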